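(* Let $f,w\colon\mathbb{R}^d\to[0,\infty)$ be two proper log-concave functions such that the support of $w$ is bounded. Then for every $\xi\in(0,\|f\|_\infty)$ there is a positive position $g$ of $w$ with $g\le f$ and $\|g\|_\infty=\xi$.
   Context: A function $\mathbb{R}^d\to[0,\infty)$ is proper log-concave if it is upper semi-continuous, log-concave, with finite positive integral. The positive positions of $w$ are the functions $x\mapsto\alpha\,w(Ax+a)$ with $A$ a positive definite $d\times d$ matrix, $\alpha>0$, $a\in\mathbb{R}^d$. $g\le f$ means pointwise inequality; $\|\cdot\|_\infty$ is the supremum norm. *)

theory Defs
  imports "HOL-Analysis.Analysis"
begin

definition upper_semicont :: "('a::topological_space \<Rightarrow> real) \<Rightarrow> bool" where
  "upper_semicont f \<longleftrightarrow> (\<forall>x. \<forall>e>0. \<forall>\<^sub>F y in at x. f y < f x + e)"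

definition log_concave :: "('a::real_vector \<Rightarrow> real) \<Rightarrow> bool" where
  "log_concave f \<longleftrightarrow> (\<forall>x y. \<forall>t::real. 0 < t \<and> t < 1 \<longrightarrow>
       f ((1 - t) *\<^sub>R x + t *\<^sub>R y) \<ge> f x powr (1 - t) * f y powr t)"

definition proper_log_concave :: "(real^'n \<Rightarrow> real) \<Rightarrow> bool" where
  "proper_log_concave f \<longleftrightarrow> (\<forall>x. 0 \<le> f x) \<and> upper_semicont f \<and> log_concave f \<and>
       f integrable_on UNIV \<and> integral UNIV f > 0"

definition pos_def_matrix :: "real^'n^'n \<Rightarrow> bool" where
  "pos_def_matrix A \<longleftrightarrow> transpose A = A \<and> (\<forall>x. x \<noteq> 0 \<longrightarrow> x \<bullet> (A *v x) > 0)"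

definition positive_position :: "(real^'n \<Rightarrow> real) \<Rightarrow> (real^'n \<Rightarrow> real) \<Rightarrow> bool" where
  "positive_position w g \<longleftrightarrow> (\<exists>A \<alpha> a. pos_def_matrix A \<and> \<alpha> > 0 \<and>
       g = (\<lambda>x. \<alpha> * w (A *v x + a)))"

definition sup_norm :: "('a \<Rightarrow> real) \<Rightarrow> real" where
  "sup_norm f = (SUP x. \<bar>f x\<bar>)"

end

theory Submission
  imports Defs
begin


lemma usc_bdd:
  fixes w :: "'a::heine_borel \<Rightarrow> real"
  assumes usc: "upper_semicont w" and bd: "bounded {x. w x \<noteq> 0}"
  shows "bdd_above (range w)"
proof -
  let ?K = "closure {x. w x \<noteq> 0}"
  have K: "compact ?K" using bd by (simp add: compact_closure)
  have "\<forall>x. \<exists>U. open U \<and> x \<in> U \<and> (\<forall>y\<in>U. y \<noteq> x \<longrightarrow> w y < w x + 1)"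
  proof
    fix x
    have "\<forall>\<^sub>F y in at x. w y < w x + 1" using usc unfolding upper_semicont_def by simp
    then show "\<exists>U. open U \<and> x \<in> U \<and> (\<forall>y\<in>U. y \<noteq> x \<longrightarrow> w y < w x + 1)"
      unfolding eventually_at_topological by blast
  qed
  from choice[OF this] obtain U where U0: "\<forall>x. open (U x) \<and> x \<in> U x \<and> (\<forall>y\<in>U x. y \<noteq> x \<longrightarrow> w y < w x + 1)"
    by blast
  have U1: "\<And>x. open (U x)" using U0 by blast
  have U2: "\<And>x. x \<in> U x" using U0 by blast
  have U3: "\<And>x y. y \<in> U x \<Longrightarrow> y \<noteq> x \<Longrightarrow> w y < w x + 1" using U0 by blast
  note U = U1 U2 U3
  have "?K \<subseteq> (\<Union>c\<in>?K. U c)" using U(2) by blast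
  from compactE_image[OF K U(1) this] obtain C where C: "C \<subseteq> ?K" "finite C" "?K \<subseteq> (\<Union>c\<in>C. U c)" by blast
  define B where "B = (\<Sum>c\<in>C. \<bar>w c\<bar> + 1)"
  have "w x \<le> B" for x
  proof (cases "x \<in> ?K")
    case True
    then obtain c where c: "c \<in> C" "x \<in> U c" using C(3) by blast
    have "w x \<le> \<bar>w c\<bar> + 1"
    proof (cases "x = c")
      case False
      then show ?thesis using U(3)[OF c(2)] by linarith
    qed simp
    also have "\<dots> \<le> B" unfolding B_def
      using c C by (intro member_le_sum) auto
    finally show ?thesis .
  next
    case False
    then have "w x = 0" using closure_subset by (metis (mono_tags, lifting) mem_Collect_eq subsetD)
    moreover have "0 \<le> B" unfolding B_def by (intro sum_nonneg) auto
    ultimately show ?thesis by simp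
  qed
  then show ?thesis by (intro bdd_aboveI) blast
qed


lemma convex_level:
  fixes f :: "'a::real_vector \<Rightarrow> real"
  assumes lc: "log_concave f" and c: "0 \<le> c"
  shows "convex {x. f x > c}"
proof (rule convexI)
  fix x y and u v :: real
  assume x: "x \<in> {x. f x > c}" and y: "y \<in> {x. f x > c}" and u: "0 \<le> u" and v: "0 \<le> v" and uv: "u + v = 1"
  show "u *\<^sub>R x + v *\<^sub>R y \<in> {x. f x > c}"
  proof (cases "v = 0 \<or> v = 1")
    case True
    then show ?thesis using x y uv by auto
  next
    case False
    then have v01: "0 < v" "v < 1" using v uv u by auto
    have u1: "u = 1 - v" using uv by simp
    have "c = c powr (1 - v) * c powr v"
    proof (cases "c = 0")
      case False
      then show ?thesis using c by (simp add: powr_add[symmetric])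
    qed simp
    also have "\<dots> < f x powr (1 - v) * f y powr v"
    proof (cases "c = 0")
      case True
      then show ?thesis using x y v01 by simp
    next
      case False
      then show ?thesis using x y v01 c
        by (intro mult_strict_mono powr_less_mono2) auto
    qed
    also have "\<dots> \<le> f (u *\<^sub>R x + v *\<^sub>R y)" using lc v01 unfolding log_concave_def u1 by blast
    finally show ?thesis by simp
  qed
qed



lemma matv: "(mat (l::real) :: real^'n^'n) *v x = l *\<^sub>R x"
  by (simp add: vec_eq_iff matrix_vector_mult_def mat_def if_distrib[where f="\<lambda>g. g (x $ _)"] if_distrib[where f="\<lambda>g. g * (x $ _)"] cong: if_cong)
lemma posdef: "(l::real) > 0 \<Longrightarrow> pos_def_matrix (mat l :: real^'n^'n)"
  unfolding pos_def_matrix_def matv by (simp add: transpose_mat)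

lemma level_ball:
  fixes f :: "real^'n \<Rightarrow> real"
  assumes "proper_log_concave f"
  shows "\<exists>c y r. 0 < c \<and> 0 < r \<and> (\<forall>z\<in>ball y r. c < f z)"
proof (rule ccontr)
  assume H: "\<not> ?thesis"
  have nn: "\<And>x. 0 \<le> f x" and lc: "log_concave f" and int: "integral UNIV f > 0"
    using assms unfolding proper_log_concave_def by auto
  define S where "S n = {x. f x > 1 / real (Suc n)}" for n
  have "negligible (S n)" for n
  proof -
    have cv: "convex (S n)" unfolding S_def by (rule convex_level[OF lc]) simp
    have "interior (S n) = {}"
    proof (rule ccontr)
      assume "interior (S n) \<noteq> {}"
      then obtain y where "y \<in> interior (S n)" by blast
      then obtain r where r: "0 < r" "ball y r \<subseteq> S n" using mem_interior by blast
      have "\<forall>z\<in>ball y r. 1 / real (Suc n) < f z" using r(2) unfolding S_def by blast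
      then show False using H r(1) by (metis of_nat_0_less_iff zero_less_Suc divide_pos_pos zero_less_one)
    qed
    then show ?thesis using negligible_convex_interior[OF cv] by simp
  qed
  then have neg: "negligible (\<Union>n. S n)" by (rule negligible_Union_nat)
  have "f x = 0" if "x \<notin> (\<Union>n. S n)" for x
  proof (rule ccontr)
    assume "f x \<noteq> 0"
    then have "f x > 0" using nn[of x] by simp
    then obtain n where "inverse (real (Suc n)) < f x" using reals_Archimedean by blast
    then have "x \<in> S n" unfolding S_def by (simp add: inverse_eq_divide)
    then show False using that by blast
  qed
  then have "(f has_integral 0) UNIV" by (intro has_integral_negligible[OF neg]) auto
  then show False using int by (simp add: integral_unique)
qed


lemma ball_ge:
  fixes f :: "real^'n \<Rightarrow> real"
  assumes lc: "log_concave f" and nn: "\<And>x. 0 \<le> f x" and xi: "0 < \<xi>" and x0: "\<xi> < f x0"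
    and c: "0 < c" and r: "0 < r" and ball: "\<forall>z\<in>ball y r. c < f z"
  shows "\<exists>p \<rho>. 0 < \<rho> \<and> (\<forall>z\<in>ball p \<rho>. \<xi> \<le> f z)"
proof -
  define c' where "c' = min c (\<xi>/2)"
  define a where "a = f x0"
  have c'pos: "0 < c'" and c'lt: "c' < \<xi>" and c'c: "c' \<le> c" using c xi unfolding c'_def by auto
  have apos: "0 < a" and axi: "\<xi> < a" using x0 xi unfolding a_def by auto
  have l1: "ln c' < ln \<xi>" and l2: "ln \<xi> < ln a" using c'pos c'lt axi xi by auto
  define t where "t = (ln a - ln \<xi>) / (ln a - ln c')"
  have t0: "0 < t" and t1: "t < 1" using l1 l2 unfolding t_def by (auto simp: field_simps)
  have key: "a powr (1 - t) * c' powr t = \<xi>"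
  proof -
    have "(1 - t) * ln a + t * ln c' = ln a - t * (ln a - ln c')" by algebra
    also have "\<dots> = ln \<xi>" unfolding t_def using l1 l2 by (simp add: field_simps)
    finally have e: "(1 - t) * ln a + t * ln c' = ln \<xi>" .
    have "a powr (1 - t) * c' powr t = exp ((1 - t) * ln a + t * ln c')"
      using apos c'pos by (simp add: powr_def exp_add)
    also have "\<dots> = \<xi>" using e xi by simp
    finally show ?thesis .
  qed
  define p where "p = (1 - t) *\<^sub>R x0 + t *\<^sub>R y"
  have "\<xi> \<le> f z'" if z': "z' \<in> ball p (t * r)" for z'
  proof -
    define z where "z = (1 / t) *\<^sub>R (z' - (1 - t) *\<^sub>R x0)"
    have zz: "(1 - t) *\<^sub>R x0 + t *\<^sub>R z = z'" using t0 unfolding z_def by (simp add: algebra_simps)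
    have "y - z = (1 / t) *\<^sub>R (p - z')" using t0 unfolding z_def p_def by (simp add: algebra_simps)
    then have "dist y z = (1 / t) * dist p z'" using t0 by (simp add: dist_norm)
    also have "\<dots> < (1 / t) * (t * r)" using z' t0 by (intro mult_strict_left_mono) auto
    also have "\<dots> = r" using t0 by simp
    finally have "z \<in> ball y r" by simp
    then have fz: "c' < f z" using ball c'c by force
    have "\<xi> = a powr (1 - t) * c' powr t" using key by simp
    also have "\<dots> \<le> a powr (1 - t) * f z powr t"
      using fz c'pos t0 by (intro mult_left_mono powr_mono2) auto
    also have "\<dots> \<le> f z'" using lc t0 t1 zz unfolding log_concave_def a_def by metis
    finally show ?thesis .
  qed
  then show ?thesis using t0 r by (intro exI[of _ p] exI[of _ "t * r"]) auto
qed

theorem lemmaA3: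
  fixes f w :: "real^'n \<Rightarrow> real"
  assumes "proper_log_concave f" and "proper_log_concave w"
    and "bounded {x. w x \<noteq> 0}"
    and "0 < \<xi>" and "\<xi> < sup_norm f"
  shows "\<exists>g. positive_position w g \<and> (\<forall>x. g x \<le> f x) \<and> sup_norm g = \<xi>"
proof -
  have fnn: "\<And>x. 0 \<le> f x" and flc: "log_concave f"
    using assms(1) unfolding proper_log_concave_def by auto
  have wnn: "\<And>x. 0 \<le> w x" and wusc: "upper_semicont w" and wint: "integral UNIV w > 0"
    using assms(2) unfolding proper_log_concave_def by auto
  have xi: "0 < \<xi>" using assms(4) .
  obtain x0 where x0: "\<xi> < f x0"
  proof (cases "bdd_above (range (\<lambda>x. \<bar>f x\<bar>))")
    case True
    then obtain x where "\<xi> < \<bar>f x\<bar>" using assms(5) unfolding sup_norm_def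
      by (subst (asm) less_cSUP_iff) auto
    then show ?thesis using that fnn[of x] by simp
  next
    case False
    then obtain x where "\<not> \<bar>f x\<bar> \<le> \<xi>" unfolding bdd_above_def by auto
    then show ?thesis using that fnn[of x] by (metis not_le abs_of_nonneg)
  qed
  obtain c y r where cyr: "0 < c" "0 < r" "\<forall>z\<in>ball y r. c < f z"
    using level_ball[OF assms(1)] by blast
  obtain p \<rho> where pr: "0 < \<rho>" "\<forall>z\<in>ball p \<rho>. \<xi> \<le> f z"
    using ball_ge[OF flc fnn xi x0 cyr] by blast
  obtain R where R: "0 < R" "{x. w x \<noteq> 0} \<subseteq> ball 0 R"
    using bounded_subset_ballD[OF assms(3)] by blast
  have bw: "bdd_above (range w)" by (rule usc_bdd[OF wusc assms(3)])
  define M where "M = sup_norm w"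
  have Mw: "M = (SUP x. w x)" unfolding M_def sup_norm_def using wnn by (simp add: abs_of_nonneg)
  have wM: "w v \<le> M" for v unfolding Mw using bw by (simp add: cSUP_upper)
  obtain x1 where x1: "w x1 > 0"
  proof (rule ccontr)
    assume "\<not> thesis"
    then have "\<And>x. w x = 0" using that wnn by (metis less_eq_real_def)
    then have "w = (\<lambda>x. 0)" by auto
    then show False using wint by simp
  qed
  have Mpos: "0 < M" using wM[of x1] x1 by simp
  define l where "l = R / \<rho>"
  have lpos: "0 < l" unfolding l_def using R pr by simp
  define A :: "real^'n^'n" where "A = mat l"
  define a where "a = - (l *\<^sub>R p)"
  define g where "g = (\<lambda>x. (\<xi> / M) * w (A *v x + a))"
  have Ax: "A *v x + a = l *\<^sub>R (x - p)" for x unfolding A_def a_def matv by (simp add: algebra_simps)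
  have pp: "positive_position w g" unfolding positive_position_def g_def
    using posdef[OF lpos] xi Mpos A_def by (intro exI[of _ A] exI[of _ "\<xi> / M"] exI[of _ a]) auto
  have gle: "g x \<le> \<xi>" for x
  proof -
    have "g x = \<xi> * (w (A *v x + a) / M)" unfolding g_def by simp
    also have "\<dots> \<le> \<xi> * 1" using xi Mpos wM wnn by (intro mult_left_mono) auto
    finally show ?thesis by simp
  qed
  have gnn: "0 \<le> g x" for x unfolding g_def using xi Mpos wnn by simp
  have gf: "g x \<le> f x" for x
  proof (cases "w (A *v x + a) = 0")
    case True
    then show ?thesis unfolding g_def using fnn by simp
  next
    case False
    then have "l *\<^sub>R (x - p) \<in> ball 0 R" using R(2) Ax by auto
    then have "l * norm (x - p) < R" using lpos by simp
    then have "norm (x - p) < \<rho>" unfolding l_def using R pr by (simp add: field_simps)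
    then have "x \<in> ball p \<rho>" by (simp add: dist_norm norm_minus_commute)
    then have "\<xi> \<le> f x" using pr by blast
    then show ?thesis using gle[of x] by simp
  qed
  have bg: "bdd_above (range (\<lambda>x. \<bar>g x\<bar>))" using gle gnn by (intro bdd_aboveI[of _ \<xi>]) auto
  define G where "G = sup_norm g"
  have G1: "G \<le> \<xi>" unfolding G_def sup_norm_def using gle gnn by (intro cSUP_least) auto
  have G2: "w v \<le> G * M / \<xi>" for v
  proof -
    define x where "x = p + (1 / l) *\<^sub>R v"
    have "A *v x + a = v" unfolding Ax x_def using lpos by simp
    then have "g x = (\<xi> / M) * w v" unfolding g_def by simp
    moreover have "\<bar>g x\<bar> \<le> G" unfolding G_def sup_norm_def by (rule cSUP_upper[OF UNIV_I bg])
    ultimately have "(\<xi> / M) * w v \<le> G" using gnn[of x] by (metis abs_of_nonneg)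
    then show ?thesis using xi Mpos by (simp add: field_simps)
  qed
  have "(SUP v. w v) \<le> G * M / \<xi>" by (rule cSUP_least) (use G2 in auto)
  then have "M \<le> G * M / \<xi>" using Mw by simp
  then have "\<xi> \<le> G" using xi Mpos by (simp add: field_simps)
  then have "sup_norm g = \<xi>" using G1 G_def by simp
  then show ?thesis using pp gf by blast
qed

end
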